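(* Let $(X,d)$ be a complete metric space and $H(X)$ the space of nonempty compact subsets of $X$ with the Hausdorff metric $h$. Fix $n\in\mathbb{N}$ and for each $i\in\mathbb{N}$ let $F_i=\{X;f_{1,i},\dots,f_{n,i}\}$ with continuous maps $f_{r,i}:X\to X$, each a $\phi$-contraction with comparison function $\phi_{r,i}$, and let $F_i(A)=\bigcup_{r=1}^n f_{r,i}(A)$ for $A\in H(X)$. Suppose there is a compact set $C\subseteq X$ which is an invariant domain for every $f_{r,i}$ ($f_{r,i}(C)\subseteq C$ for all $r,i$), and that for each $r=1,\dots,n$ the sequence $\{f_{r,i}\}_{i\in\mathbb{N}}$ converges uniformly on $C$ to a map $f_r$ as $i\to\infty$. Suppose further that the set map $F(A)=\bigcup_{r=1}^n f_r(A)$ is a $\phi$-contraction on $(H(X),h)$ for some comparison function $\phi$. Then for every nonempty compact $P\subseteq C$ the forward trajectory $\Phi_k(P)=F_k\circ F_{k-1}\circ\cdots\circ F_1(P)$ converges in $(H(X),h)$ to the unique attractor (fixed point) of $F$.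
   Context: A comparison function is a non-decreasing map $\phi:[0,\infty)\to[0,\infty)$ such that $\phi^p(t)\to0$ as $p\to\infty$ for every $t\ge0$ ($\phi^p$ the $p$-fold composition). A map $g$ on a metric space $(Y,\rho)$ is a $\phi$-contraction if $\rho(g(a),g(b))\le\phi(\rho(a,b))$ for all $a,b$. The Hausdorff metric is $h(A,B)=\max\{\max_{x\in A}\min_{y\in B}d(x,y),\max_{y\in B}\min_{x\in A}d(x,y)\}$. *)

theory Defs
  imports "HOL-Analysis.Analysis"
begin

definition comparison_fun :: "(real \<Rightarrow> real) \<Rightarrow> bool" where
  "comparison_fun \<phi> \<longleftrightarrow>
     (\<forall>t\<ge>0. \<phi> t \<ge> 0) \<and>
     (\<forall>s t. 0 \<le> s \<longrightarrow> s \<le> t \<longrightarrow> \<phi> s \<le> \<phi> t) \<and>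
     (\<forall>t\<ge>0. (\<lambda>p. (\<phi> ^^ p) t) \<longlonglongrightarrow> 0)"

definition phi_contraction :: "(real \<Rightarrow> real) \<Rightarrow> ('a::metric_space \<Rightarrow> 'a) \<Rightarrow> bool" where
  "phi_contraction \<phi> g \<longleftrightarrow> (\<forall>a b. dist (g a) (g b) \<le> \<phi> (dist a b))"

text \<open>Hausdorff metric (max of the two excesses; on nonempty compact sets the sup/inf are max/min).\<close>
definition hausdorff_dist :: "'a::metric_space set \<Rightarrow> 'a set \<Rightarrow> real" where
  "hausdorff_dist A B = max (SUP x\<in>A. infdist x B) (SUP y\<in>B. infdist y A)"

definition set_phi_contraction :: "(real \<Rightarrow> real) \<Rightarrow> ('a::metric_space set \<Rightarrow> 'a set) \<Rightarrow> bool" where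
  "set_phi_contraction \<phi> G \<longleftrightarrow>
     (\<forall>A. compact A \<and> A \<noteq> {} \<longrightarrow> compact (G A) \<and> G A \<noteq> {}) \<and>
     (\<forall>A B. compact A \<and> A \<noteq> {} \<and> compact B \<and> B \<noteq> {} \<longrightarrow>
        hausdorff_dist (G A) (G B) \<le> \<phi> (hausdorff_dist A B))"

fun traj :: "(nat \<Rightarrow> 'a set \<Rightarrow> 'a set) \<Rightarrow> 'a set \<Rightarrow> nat \<Rightarrow> 'a set" where
  "traj Fs P 0 = P"
| "traj Fs P (Suc k) = Fs (Suc k) (traj Fs P k)"

end

theory Submission
  imports Defs
begin


lemma hd_sym: "hausdorff_dist A B = hausdorff_dist B A"
  by (simp add: hausdorff_dist_def max.commute)

lemma bdd_infdist:
  assumes "bounded A" "B \<noteq> {}"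
  shows "bdd_above ((\<lambda>x. infdist x B) ` A)"
proof -
  obtain b where b: "b \<in> B" using assms by blast
  obtain e where e: "\<forall>y\<in>A. dist b y \<le> e" using assms(1) bounded_any_center by blast
  have "\<forall>x\<in>A. infdist x B \<le> e"
    by (metis b e dist_commute infdist_le order_trans)
  then show ?thesis by (auto simp: bdd_above_def)
qed

lemma hd_upper1:
  assumes "bounded A" "B \<noteq> {}" "x \<in> A"
  shows "infdist x B \<le> hausdorff_dist A B"
proof -
  have "infdist x B \<le> (SUP x\<in>A. infdist x B)"
    by (rule cSUP_upper[OF assms(3) bdd_infdist[OF assms(1,2)]])
  then show ?thesis unfolding hausdorff_dist_def by linarith
qed

lemma hd_upper2:
  assumes "bounded B" "A \<noteq> {}" "y \<in> B"
  shows "infdist y A \<le> hausdorff_dist A B"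
  using hd_upper1[OF assms] hd_sym by metis

lemma hd_nonneg:
  assumes "bounded A" "A \<noteq> {}" "B \<noteq> {}"
  shows "0 \<le> hausdorff_dist A B"
proof -
  obtain x where x: "x \<in> A" using assms by blast
  show ?thesis using hd_upper1[OF assms(1,3) x] infdist_nonneg[of x B] by linarith
qed

lemma hd_le:
  assumes "A \<noteq> {}" "B \<noteq> {}" "\<And>x. x\<in>A \<Longrightarrow> infdist x B \<le> e" "\<And>y. y\<in>B \<Longrightarrow> infdist y A \<le> e"
  shows "hausdorff_dist A B \<le> e"
  unfolding hausdorff_dist_def using assms
  by (auto intro!: cSUP_least)

lemma infdist_via:
  assumes "B \<noteq> {}" "\<And>y. y \<in> B \<Longrightarrow> infdist x C \<le> c + dist x y"
  shows "infdist x C \<le> c + infdist x B"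
proof -
  have "infdist x C - c \<le> (INF y\<in>B. dist x y)"
    using assms by (intro cINF_greatest) (auto simp: algebra_simps)
  then show ?thesis using assms(1) by (simp add: infdist_def)
qed

lemma hd_triangle:
  assumes "bounded A" "bounded B" "bounded C" "A \<noteq> {}" "B \<noteq> {}" "C \<noteq> {}"
  shows "hausdorff_dist A C \<le> hausdorff_dist A B + hausdorff_dist B C"
proof (rule hd_le)
  fix x assume x: "x \<in> A"
  have "infdist x C \<le> hausdorff_dist B C + infdist x B"
  proof (rule infdist_via[OF assms(5)])
    fix y assume y: "y \<in> B"
    have "infdist y C \<le> hausdorff_dist B C" using hd_upper1[OF assms(2,6) y] .
    moreover have "infdist x C \<le> infdist y C + dist x y" by (rule infdist_triangle)
    ultimately show "infdist x C \<le> hausdorff_dist B C + dist x y" by linarith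
  qed
  moreover have "infdist x B \<le> hausdorff_dist A B" using hd_upper1[OF assms(1,5) x] .
  ultimately show "infdist x C \<le> hausdorff_dist A B + hausdorff_dist B C" by linarith
next
  fix z assume z: "z \<in> C"
  have "infdist z A \<le> hausdorff_dist A B + infdist z B"
  proof (rule infdist_via[OF assms(5)])
    fix y assume y: "y \<in> B"
    have "infdist y A \<le> hausdorff_dist A B" using hd_upper2[OF assms(2,4) y] .
    moreover have "infdist z A \<le> infdist y A + dist z y" by (rule infdist_triangle)
    ultimately show "infdist z A \<le> hausdorff_dist A B + dist z y" by linarith
  qed
  moreover have "infdist z B \<le> hausdorff_dist B C" using hd_upper2[OF assms(3,5) z] .
  ultimately show "infdist z A \<le> hausdorff_dist A B + hausdorff_dist B C" by linarith
qed (use assms in auto)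

lemma hd_zero:
  assumes "closed A" "closed B" "bounded A" "bounded B" "A \<noteq> {}" "B \<noteq> {}"
    and "hausdorff_dist A B \<le> 0"
  shows "A = B"
proof
  show "A \<subseteq> B"
  proof
    fix x assume x: "x \<in> A"
    have "infdist x B = 0" using hd_upper1[OF assms(3,6) x] assms(7) infdist_nonneg[of x B] by linarith
    then show "x \<in> B" using in_closure_iff_infdist_zero[OF assms(6)] assms(2) closure_closed by metis
  qed
  show "B \<subseteq> A"
  proof
    fix x assume x: "x \<in> B"
    have "infdist x A = 0" using hd_upper2[OF assms(4,5) x] assms(7) infdist_nonneg[of x A] by linarith
    then show "x \<in> A" using in_closure_iff_infdist_zero[OF assms(5)] assms(1) closure_closed by metis
  qed
qed

lemma nested_nonempty:
  fixes K :: "nat \<Rightarrow> 'a::metric_space set"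
  assumes "\<And>m. compact (K m)" "\<And>m. K m \<noteq> {}" "\<And>m. K (Suc m) \<subseteq> K m"
  shows "\<Inter>(range K) \<noteq> {}"
proof -
  have dec: "K j \<subseteq> K i" if "i \<le> j" for i j
    using that assms(3) by (induction j rule: dec_induct) auto
  have "K 0 \<inter> \<Inter>(range K) \<noteq> {}"
  proof (rule compact_imp_fip[OF assms(1)])
    show "closed T" if "T \<in> range K" for T using that assms(1) compact_imp_closed by auto
    fix F' assume F': "finite F'" "F' \<subseteq> range K"
    then obtain I where I: "finite I" "F' = K ` I" by (meson finite_subset_image)
    let ?j = "Max (insert 0 I)"
    have le: "\<And>i. i \<in> I \<Longrightarrow> i \<le> ?j" using I by simp
    have "K ?j \<subseteq> K 0 \<inter> \<Inter>F'"
      using I dec le by blast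
    then show "K 0 \<inter> \<Inter>F' \<noteq> {}" using assms(2) by blast
  qed
  then show ?thesis by blast
qed

lemma nested_open:
  fixes K :: "nat \<Rightarrow> 'a::metric_space set"
  assumes "\<And>m. compact (K m)" "\<And>m. K (Suc m) \<subseteq> K m" "open U" "\<Inter>(range K) \<subseteq> U"
  shows "\<exists>m. K m \<subseteq> U"
proof (rule ccontr)
  assume "\<not> ?thesis"
  then have ne: "K m - U \<noteq> {}" for m by blast
  have "\<Inter>(range (\<lambda>m. K m - U)) \<noteq> {}"
  proof (rule nested_nonempty)
    fix m
    show "compact (K m - U)" using assms(1,3) by (simp add: Diff_eq compact_Int_closed open_closed)
    show "K m - U \<noteq> {}" by (rule ne)
    show "K (Suc m) - U \<subseteq> K m - U" using assms(2) by blast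
  qed
  then show False using assms(4) by blast
qed



lemma funpow_nonneg:
  assumes "comparison_fun \<phi>" "0 \<le> t" shows "0 \<le> (\<phi> ^^ m) t"
  using assms by (induction m) (auto simp: comparison_fun_def)

lemma funpow_mono:
  assumes "comparison_fun \<phi>" "0 \<le> s" "s \<le> t" shows "(\<phi> ^^ m) s \<le> (\<phi> ^^ m) t"
  using assms
proof (induction m)
  case (Suc m)
  then show ?case using funpow_nonneg[OF assms(1,2), of m] by (auto simp: comparison_fun_def)
qed simp

lemma comparison_le:
  assumes "comparison_fun \<phi>" "0 \<le> t" shows "\<phi> t \<le> t"
proof (rule ccontr)
  assume "\<not> ?thesis"
  then have gt: "t < \<phi> t" by simp
  have "\<phi> t \<le> (\<phi> ^^ Suc p) t" for p
  proof (induction p)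
    case (Suc p)
    have "(\<phi> ^^ Suc p) t \<le> (\<phi> ^^ Suc (Suc p)) t"
    proof (induction p)
      case 0 then show ?case using gt assms by (auto simp: comparison_fun_def)
    next
      case (Suc p)
      have "0 \<le> (\<phi> ^^ Suc p) t" using funpow_nonneg[OF assms] .
      then show ?case using Suc assms(1) unfolding comparison_fun_def
        by (metis comp_apply funpow.simps(2))
    qed
    then show ?case using Suc by simp
  qed simp
  moreover have "(\<lambda>p. (\<phi> ^^ Suc p) t) \<longlonglongrightarrow> 0"
    using assms unfolding comparison_fun_def using LIMSEQ_Suc by blast
  ultimately have "\<phi> t \<le> 0" using LIMSEQ_le_const[of "\<lambda>p. (\<phi> ^^ Suc p) t" 0 "\<phi> t"] by blast
  then show False using gt assms by linarith
qed

theorem corollary4p3: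
  fixes n :: nat
    and f :: "nat \<Rightarrow> nat \<Rightarrow> 'a::complete_space \<Rightarrow> 'a"
    and \<phi>i :: "nat \<Rightarrow> nat \<Rightarrow> real \<Rightarrow> real"
    and g :: "nat \<Rightarrow> 'a \<Rightarrow> 'a"
    and \<phi> :: "real \<Rightarrow> real"
    and C P :: "'a set"
  assumes n: "n \<ge> 1"
    and cont: "\<And>r i. r \<in> {1..n} \<Longrightarrow> i \<ge> 1 \<Longrightarrow> continuous_on UNIV (f r i)"
    and cmp_ri: "\<And>r i. r \<in> {1..n} \<Longrightarrow> i \<ge> 1 \<Longrightarrow> comparison_fun (\<phi>i r i)"
    and contr_ri: "\<And>r i. r \<in> {1..n} \<Longrightarrow> i \<ge> 1 \<Longrightarrow> phi_contraction (\<phi>i r i) (f r i)"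
    and C: "compact C"
    and inv: "\<And>r i. r \<in> {1..n} \<Longrightarrow> i \<ge> 1 \<Longrightarrow> f r i ` C \<subseteq> C"
    and unif: "\<And>r. r \<in> {1..n} \<Longrightarrow> uniform_limit C (\<lambda>i. f r i) (g r) sequentially"
    and cmp: "comparison_fun \<phi>"
    and Fcontr: "set_phi_contraction \<phi> (\<lambda>A. \<Union>r\<in>{1..n}. g r ` A)"
    and P: "compact P" "P \<noteq> {}" "P \<subseteq> C"
  shows "\<exists>A. compact A \<and> A \<noteq> {} \<and> (\<Union>r\<in>{1..n}. g r ` A) = A
           \<and> (\<forall>B. compact B \<and> B \<noteq> {} \<and> (\<Union>r\<in>{1..n}. g r ` B) = B \<longrightarrow> B = A)
           \<and> (\<lambda>k. hausdorff_dist (traj (\<lambda>i A. \<Union>r\<in>{1..n}. f r i ` A) P k) A) \<longlonglongrightarrow> 0"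
proof -
  define G where "G = (\<lambda>B. \<Union>r\<in>{1..n}. g r ` B)"
  define F where "F = (\<lambda>i B. \<Union>r\<in>{1..n}. f r i ` B)"
  define T where "T = traj F P"
  have Cb: "bounded C" "closed C" using C compact_imp_bounded compact_imp_closed by auto
  have Cne: "C \<noteq> {}" using P by auto
  have gC: "g r ` C \<subseteq> C" if r: "r \<in> {1..n}" for r
  proof
    fix y assume "y \<in> g r ` C"
    then obtain x where x: "x \<in> C" "y = g r x" by auto
    have lim: "(\<lambda>i. f r i x) \<longlonglongrightarrow> g r x"
      by (rule tendsto_uniform_limitI[OF unif[OF r] x(1)])
    have ev: "eventually (\<lambda>i. f r i x \<in> C) sequentially"
      using inv[OF r] x(1) unfolding eventually_sequentially by (intro exI[of _ 1]) auto
    show "y \<in> C" using Lim_in_closed_set[OF Cb(2) ev _ lim] x by simp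
  qed
  have FC1: "\<forall>A. compact A \<and> A \<noteq> {} \<longrightarrow> compact (G A) \<and> G A \<noteq> {}"
    using Fcontr unfolding set_phi_contraction_def G_def by (rule conjunct1)
  have FC2: "\<forall>A B. compact A \<and> A \<noteq> {} \<and> compact B \<and> B \<noteq> {} \<longrightarrow>
        hausdorff_dist (G A) (G B) \<le> \<phi> (hausdorff_dist A B)"
    using Fcontr unfolding set_phi_contraction_def G_def by (rule conjunct2)
  have Gok: "compact (G B) \<and> G B \<noteq> {} \<and> G B \<subseteq> C" if "compact B" "B \<noteq> {}" "B \<subseteq> C" for B
  proof -
    have "compact (G B) \<and> G B \<noteq> {}" using FC1 that by simp
    moreover have "G B \<subseteq> C"
    proof
      fix y assume "y \<in> G B"
      then obtain r x where "r \<in> {1..n}" "x \<in> B" "y = g r x" unfolding G_def by auto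
      then show "y \<in> C" using gC that(3) by blast
    qed
    ultimately show ?thesis by simp
  qed
  have Gc: "hausdorff_dist (G A) (G B) \<le> hausdorff_dist A B"
    if "compact A" "A \<noteq> {}" "compact B" "B \<noteq> {}" for A B
  proof -
    have "hausdorff_dist (G A) (G B) \<le> \<phi> (hausdorff_dist A B)"
      using FC2 that by simp
    also have "\<dots> \<le> hausdorff_dist A B"
    proof -
      have "0 \<le> hausdorff_dist A B" using hd_nonneg[OF compact_imp_bounded[OF that(1)] that(2,4)] .
      then show ?thesis by (rule comparison_le[OF cmp])
    qed
    finally show ?thesis .
  qed
  have Gphi: "hausdorff_dist (G A) (G B) \<le> \<phi> (hausdorff_dist A B)"
    if "compact A" "A \<noteq> {}" "compact B" "B \<noteq> {}" for A B
    using FC2 that by simp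
  have Fok: "compact (F i B) \<and> F i B \<noteq> {} \<and> F i B \<subseteq> C" if "i \<ge> 1" "compact B" "B \<noteq> {}" "B \<subseteq> C" for i B
  proof (intro conjI)
    show "compact (F i B)" unfolding F_def
    proof (intro compact_UN)
      fix r assume r: "r \<in> {1..n}"
      have "continuous_on B (f r i)" using continuous_on_subset[OF cont[OF r that(1)]] by blast
      then show "compact (f r i ` B)" using that(2) by (rule compact_continuous_image)
    qed simp
    show "F i B \<noteq> {}" unfolding F_def using that n by auto
    show "F i B \<subseteq> C" unfolding F_def using that inv by blast
  qed
  have FG: "hausdorff_dist (F i B) (G B) \<le> \<delta>"
    if "i \<ge> 1" "compact B" "B \<noteq> {}" "B \<subseteq> C"
      and d: "\<forall>r\<in>{1..n}. \<forall>x\<in>C. dist (f r i x) (g r x) \<le> \<delta>" for i B \<delta>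
  proof (rule hd_le)
    show "F i B \<noteq> {}" "G B \<noteq> {}" using Fok Gok that by auto
    fix y assume "y \<in> F i B"
    then obtain r x where rx: "r \<in> {1..n}" "x \<in> B" "y = f r i x" unfolding F_def by auto
    have "g r x \<in> G B" using rx unfolding G_def by auto
    moreover have "dist y (g r x) \<le> \<delta>" using rx d that by auto
    ultimately show "infdist y (G B) \<le> \<delta>" by (rule infdist_le2)
  next
    fix y assume "y \<in> G B"
    then obtain r x where rx: "r \<in> {1..n}" "x \<in> B" "y = g r x" unfolding G_def by auto
    have "f r i x \<in> F i B" using rx unfolding F_def by auto
    moreover have "dist y (f r i x) \<le> \<delta>" using rx d that by (auto simp: dist_commute)
    ultimately show "infdist y (F i B) \<le> \<delta>" by (rule infdist_le2)
  qed
  have Tok: "compact (T k) \<and> T k \<noteq> {} \<and> T k \<subseteq> C" for k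
  proof (induction k)
    case 0 then show ?case using P by (simp add: T_def)
  next
    case (Suc k)
    have "T (Suc k) = F (Suc k) (T k)" by (simp add: T_def)
    then show ?case using Fok[of "Suc k" "T k"] Suc by auto
  qed
  have Unif: "\<exists>N. \<forall>i\<ge>N. \<forall>r\<in>{1..n}. \<forall>x\<in>C. dist (f r i x) (g r x) \<le> \<delta>" if "\<delta> > 0" for \<delta>
  proof -
    have "\<forall>r\<in>{1..n}. eventually (\<lambda>i. \<forall>x\<in>C. dist (f r i x) (g r x) < \<delta>) sequentially"
      using unif that unfolding uniform_limit_iff by blast
    then have "eventually (\<lambda>i. \<forall>r\<in>{1..n}. \<forall>x\<in>C. dist (f r i x) (g r x) < \<delta>) sequentially"
      by (intro eventually_ball_finite) auto
    then obtain N where "\<forall>i\<ge>N. \<forall>r\<in>{1..n}. \<forall>x\<in>C. dist (f r i x) (g r x) < \<delta>"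
      unfolding eventually_sequentially by blast
    then show ?thesis by (intro exI[of _ N]) (auto intro: less_imp_le)
  qed
  define K where "K m = (G ^^ m) C" for m
  have Kok: "compact (K m) \<and> K m \<noteq> {} \<and> K m \<subseteq> C" for m
    by (induction m) (use C Cne Gok in \<open>auto simp: K_def\<close>)
  have Gmono: "G X \<subseteq> G Y" if "X \<subseteq> Y" for X Y using that unfolding G_def by blast
  have Kdec: "K (Suc m) \<subseteq> K m" for m
  proof (induction m)
    case 0 then show ?case using Kok[of 1] by (simp add: K_def)
  next
    case (Suc m) then show ?case using Gmono by (simp add: K_def)
  qed
  define A where "A = \<Inter>(range K)"
  have Ane: "A \<noteq> {}" unfolding A_def using nested_nonempty[of K] Kok Kdec by blast
  have AC: "A \<subseteq> C" unfolding A_def using Kok by blast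
  have Acomp: "compact A"
  proof -
    have "A = K 0 \<inter> \<Inter>(range K)" unfolding A_def by blast
    moreover have "closed (\<Inter>(range K))"
      using Kok compact_imp_closed by (intro closed_Inter) blast
    ultimately show ?thesis using Kok[of 0] compact_Int_closed by metis
  qed
  have Ab: "bounded A" using Acomp compact_imp_bounded by auto
  have Kb: "bounded (K m)" for m using Kok compact_imp_bounded by auto
  have Kclose: "\<exists>m. hausdorff_dist A (K m) \<le> e \<and> hausdorff_dist (K (Suc m)) A \<le> e" if e: "e > 0" for e
  proof -
    define U where "U = (\<Union>a\<in>A. ball a e)"
    have "open U" unfolding U_def by auto
    moreover have "\<Inter>(range K) \<subseteq> U"
    proof
      fix x assume "x \<in> \<Inter>(range K)"
      then have "x \<in> A" "x \<in> ball x e" using e unfolding A_def by auto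
      then show "x \<in> U" unfolding U_def by blast
    qed
    ultimately obtain m where m: "K m \<subseteq> U" using nested_open[of K U] Kok Kdec by blast
    have AK: "A \<subseteq> K j" for j unfolding A_def by blast
    have close: "infdist y A \<le> e" if yK: "y \<in> K m" for y
    proof -
      obtain a where a: "a \<in> A" "dist a y < e" using m yK unfolding U_def by auto
      show ?thesis using a by (intro infdist_le2[OF a(1)]) (auto simp: dist_commute)
    qed
    have "hausdorff_dist A (K m) \<le> e"
    proof (rule hd_le)
      show "A \<noteq> {}" "K m \<noteq> {}" using Ane Kok by auto
      fix x assume "x \<in> A" then have "x \<in> K m" using AK by blast
      then show "infdist x (K m) \<le> e" using e by simp
    next
      fix y assume "y \<in> K m" then show "infdist y A \<le> e" by (rule close)
    qed
    moreover have "hausdorff_dist (K (Suc m)) A \<le> e"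
    proof (rule hd_le)
      show "A \<noteq> {}" "K (Suc m) \<noteq> {}" using Ane Kok by auto
      fix x assume "x \<in> A" then have "x \<in> K (Suc m)" using AK by blast
      then show "infdist x (K (Suc m)) \<le> e" using e by simp
    next
      fix y assume "y \<in> K (Suc m)" then have "y \<in> K m" using Kdec by blast
      then show "infdist y A \<le> e" by (rule close)
    qed
    ultimately show ?thesis by blast
  qed
  have GAok: "compact (G A) \<and> G A \<noteq> {} \<and> G A \<subseteq> C" using Gok Acomp Ane AC by blast
  have Afix: "G A = A"
  proof (rule hd_zero)
    show "closed (G A)" "closed A" "bounded (G A)" "bounded A" "G A \<noteq> {}" "A \<noteq> {}"
      using GAok Acomp Ane compact_imp_closed compact_imp_bounded by auto
    show "hausdorff_dist (G A) A \<le> 0"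
    proof (rule field_le_epsilon)
      fix e :: real assume e: "0 < e"
      obtain m where m: "hausdorff_dist A (K m) \<le> e/2" "hausdorff_dist (K (Suc m)) A \<le> e/2"
        using Kclose[of "e/2"] e by auto
      have "hausdorff_dist (G A) A \<le> hausdorff_dist (G A) (K (Suc m)) + hausdorff_dist (K (Suc m)) A"
        by (rule hd_triangle) (use GAok Kok Ane Kb Ab compact_imp_bounded in auto)
      also have "hausdorff_dist (G A) (K (Suc m)) \<le> hausdorff_dist A (K m)"
        using Gc[of A "K m"] Acomp Ane Kok by (simp add: K_def)
      finally show "hausdorff_dist (G A) A \<le> 0 + e" using m by linarith
    qed
  qed
  have uniq: "B = A" if B: "compact B" "B \<noteq> {}" "G B = B" for B
  proof (rule hd_zero)
    show "closed B" "closed A" "bounded B" "bounded A" "B \<noteq> {}" "A \<noteq> {}"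
      using B Acomp Ane compact_imp_closed compact_imp_bounded by auto
    define h where "h = hausdorff_dist B A"
    have h0: "0 \<le> h" unfolding h_def using hd_nonneg[OF compact_imp_bounded[OF B(1)] B(2) Ane] .
    have hp: "h \<le> (\<phi> ^^ p) h" for p
    proof (induction p)
      case (Suc p)
      have "h \<le> \<phi> h" using Gphi[of B A] B Acomp Ane Afix unfolding h_def by simp
      also have "\<phi> h \<le> \<phi> ((\<phi> ^^ p) h)" using Suc h0 cmp unfolding comparison_fun_def by blast
      finally show ?case by simp
    qed simp
    have "(\<lambda>p. (\<phi> ^^ p) h) \<longlonglongrightarrow> 0" using cmp h0 unfolding comparison_fun_def by blast
    then have "h \<le> 0" using hp LIMSEQ_le_const[of "\<lambda>p. (\<phi> ^^ p) h" 0 h] by blast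
    then show "hausdorff_dist B A \<le> 0" unfolding h_def .
  qed
  define M where "M = max 0 (diameter C)"
  have M0: "0 \<le> M" unfolding M_def by simp
  have hM: "hausdorff_dist X A \<le> M" if XC: "X \<subseteq> C" and Xne: "X \<noteq> {}" for X
  proof (rule hd_le)
    show "X \<noteq> {}" "A \<noteq> {}" using Xne Ane by auto
    fix x assume x: "x \<in> X"
    obtain a where a: "a \<in> A" using Ane by blast
    have "dist x a \<le> diameter C" using diameter_bounded_bound[OF Cb(1)] x a XC AC by blast
    then show "infdist x A \<le> M" unfolding M_def using infdist_le[OF a, of x] max.cobounded2[of "diameter C" 0] by linarith
  next
    fix y assume y: "y \<in> A"
    obtain a where a: "a \<in> X" using Xne by blast
    have "dist y a \<le> diameter C" using diameter_bounded_bound[OF Cb(1)] y a XC AC by blast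
    then show "infdist y X \<le> M" unfolding M_def using infdist_le[OF a, of y] max.cobounded2[of "diameter C" 0] by linarith
  qed
  have Gpow_ok: "compact ((G ^^ m) B) \<and> (G ^^ m) B \<noteq> {} \<and> (G ^^ m) B \<subseteq> C"
    if "compact B" "B \<noteq> {}" "B \<subseteq> C" for m B
    by (induction m) (use that Gok in auto)
  have iter: "hausdorff_dist ((G ^^ m) B) A \<le> (\<phi> ^^ m) M"
    if B: "compact B" "B \<noteq> {}" "B \<subseteq> C" for m B
  proof -
    have "hausdorff_dist ((G ^^ m) B) A \<le> (\<phi> ^^ m) (hausdorff_dist B A)"
    proof (induction m)
      case (Suc m)
      have ok: "compact ((G ^^ m) B)" "(G ^^ m) B \<noteq> {}" using Gpow_ok[OF B] by auto
      have "hausdorff_dist ((G ^^ Suc m) B) A = hausdorff_dist (G ((G ^^ m) B)) (G A)"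
        using Afix by simp
      also have "\<dots> \<le> \<phi> (hausdorff_dist ((G ^^ m) B) A)"
        using Gphi ok Acomp Ane by blast
      also have "\<dots> \<le> \<phi> ((\<phi> ^^ m) (hausdorff_dist B A))"
      proof -
        have "0 \<le> hausdorff_dist ((G ^^ m) B) A" using hd_nonneg[OF compact_imp_bounded[OF ok(1)] ok(2) Ane] .
        then show ?thesis using Suc cmp unfolding comparison_fun_def by blast
      qed
      finally show ?case by simp
    qed simp
    also have "\<dots> \<le> (\<phi> ^^ m) M"
    proof (rule funpow_mono[OF cmp])
      show "0 \<le> hausdorff_dist B A" using hd_nonneg[OF compact_imp_bounded[OF B(1)] B(2) Ane] .
      show "hausdorff_dist B A \<le> M" using hM B by blast
    qed
    finally show ?thesis .
  qed
  have drift: "hausdorff_dist (T (k + m)) ((G ^^ m) (T k)) \<le> real m * \<delta>"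
    if d: "\<forall>j. k < j \<and> j \<le> k + m \<longrightarrow> (\<forall>r\<in>{1..n}. \<forall>x\<in>C. dist (f r j x) (g r x) \<le> \<delta>)"
      and d0: "0 \<le> \<delta>"
    for k m \<delta>
    using d
  proof (induction m)
    case 0
    have "hausdorff_dist (T k) (T k) \<le> 0"
      by (rule hd_le) (use Tok in \<open>auto simp: infdist_zero\<close>)
    then show ?case by simp
  next
    case (Suc m)
    define X where "X = T (k + m)"
    define Y where "Y = (G ^^ m) (T k)"
    have X: "compact X" "X \<noteq> {}" "X \<subseteq> C" using Tok unfolding X_def by auto
    have Y: "compact Y" "Y \<noteq> {}" "Y \<subseteq> C" using Gpow_ok Tok unfolding Y_def by auto
    have IH: "hausdorff_dist X Y \<le> real m * \<delta>" using Suc unfolding X_def Y_def by auto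
    have eq: "T (k + Suc m) = F (Suc (k + m)) X" by (simp add: T_def X_def)
    have FX: "compact (F (Suc (k + m)) X)" "F (Suc (k + m)) X \<noteq> {}" using Fok[of "Suc (k+m)" X] X by auto
    have GX: "compact (G X)" "G X \<noteq> {}" "compact (G Y)" "G Y \<noteq> {}" using Gok X Y by auto
    have "hausdorff_dist (F (Suc (k + m)) X) (G Y) \<le> hausdorff_dist (F (Suc (k + m)) X) (G X) + hausdorff_dist (G X) (G Y)"
      by (rule hd_triangle) (use FX GX compact_imp_bounded in auto)
    also have "hausdorff_dist (F (Suc (k + m)) X) (G X) \<le> \<delta>"
      by (rule FG) (use X Suc.prems in auto)
    also have "hausdorff_dist (G X) (G Y) \<le> real m * \<delta>" using Gc[OF X(1,2) Y(1,2)] IH by linarith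
    finally show ?case using eq by (simp add: Y_def algebra_simps)
  qed
  have conv: "(\<lambda>k. hausdorff_dist (T k) A) \<longlonglongrightarrow> 0"
  proof (rule LIMSEQ_I)
    fix e :: real assume e: "0 < e"
    have "(\<lambda>p. (\<phi> ^^ p) M) \<longlonglongrightarrow> 0" using cmp M0 unfolding comparison_fun_def by blast
    then have "eventually (\<lambda>p. (\<phi> ^^ p) M < e/2) sequentially" using e by (intro order_tendstoD(2)) auto
    then obtain m where m: "(\<phi> ^^ m) M < e/2" unfolding eventually_sequentially by blast
    define \<delta> where "\<delta> = e / (2 * (real m + 1))"
    have d0: "0 < \<delta>" unfolding \<delta>_def using e by simp
    have md: "real m * \<delta> < e/2"
    proof -
      have "real m * \<delta> = e/2 * (real m / (real m + 1))" unfolding \<delta>_def by (simp add: field_simps)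
      also have "\<dots> < e/2" using e by (simp add: field_simps)
      finally show ?thesis .
    qed
    obtain N where N: "\<forall>i\<ge>N. \<forall>r\<in>{1..n}. \<forall>x\<in>C. dist (f r i x) (g r x) \<le> \<delta>" using Unif[OF d0] by blast
    show "\<exists>no. \<forall>k\<ge>no. norm (hausdorff_dist (T k) A - 0) < e"
    proof (intro exI allI impI)
      fix k assume k: "N + m \<le> k"
      define k0 where "k0 = k - m"
      have kk: "k = k0 + m" using k unfolding k0_def by simp
      have d: "\<forall>j. k0 < j \<and> j \<le> k0 + m \<longrightarrow> (\<forall>r\<in>{1..n}. \<forall>x\<in>C. dist (f r j x) (g r x) \<le> \<delta>)"
        using N k unfolding k0_def by auto
      have T0: "compact (T k0)" "T k0 \<noteq> {}" "T k0 \<subseteq> C" using Tok by auto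
      have T0': "compact (T k)" "T k \<noteq> {}" using Tok by auto
      have W: "compact ((G ^^ m) (T k0))" "(G ^^ m) (T k0) \<noteq> {}" using Gpow_ok[OF T0] by auto
      have "hausdorff_dist (T k) A \<le> hausdorff_dist (T k) ((G ^^ m) (T k0)) + hausdorff_dist ((G ^^ m) (T k0)) A"
        by (rule hd_triangle) (use Tok W Acomp Ane compact_imp_bounded in auto)
      also have "\<dots> \<le> real m * \<delta> + (\<phi> ^^ m) M"
        using drift[OF d] d0 iter[OF T0, of m] kk by (intro add_mono) auto
      finally have "hausdorff_dist (T k) A < e" using md m by linarith
      moreover have "0 \<le> hausdorff_dist (T k) A" using hd_nonneg[OF compact_imp_bounded[OF T0'(1)] T0'(2) Ane] .
      ultimately show "norm (hausdorff_dist (T k) A - 0) < e" by simp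
    qed
  qed
  show ?thesis
    apply (rule exI[of _ A])
    using Acomp Ane Afix uniq conv unfolding G_def T_def F_def by blast
qed

end
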